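(* For every integer $m$, $G_{m-1}(\lambda)=\frac{\lambda}{1-\lambda}\,G_m'(\lambda)$ as formal power series in $\lambda$, where $G_m'$ denotes the formal derivative with respect to $\lambda$.
   Context: For an integer $m$ let $R_m(z)=\sum_{n\ge1} n^{n-m}\frac{z^n}{n!}$, a formal power series in $z$. Let $T(z)=\sum_{n\ge1}n^{n-1}\frac{z^n}{n!}$ (the tree function); it satisfies $T(z)=z e^{T(z)}$, so its compositional inverse is $z=\lambda e^{-\lambda}$. Define the formal power series $G_m(\lambda):=R_m(\lambda e^{-\lambda})$, so that $G_m(T(z))=R_m(z)$. *)

theory Defs
  imports "HOL-Computational_Algebra.Formal_Power_Series"
begin

definition R :: "int \<Rightarrow> real fps" where
  "R m = Abs_fps (\<lambda>n. if n = 0 then 0 else (real n) powi (int n - m) / fact n)"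

definition G :: "int \<Rightarrow> real fps" where
  "G m = fps_compose (R m) (fps_X * fps_exp (-1))"

end

theory Submission
  imports Defs
begin

lemma R_shift: "R (m - 1) = fps_X * fps_deriv (R m)"
proof (rule fps_ext)
  fix n
  show "fps_nth (R (m - 1)) n = fps_nth (fps_X * fps_deriv (R m)) n"
  proof (cases n)
    case 0 then show ?thesis by (simp add: R_def)
  next
    case (Suc k)
    have e: "real n powi (int n - (m - 1)) = real n * real n powi (int n - m)"
    proof -
      have "int n - (m - 1) = 1 + (int n - m)" by simp
      moreover have "real n \<noteq> 0" using Suc by simp
      ultimately show ?thesis using power_int_add[of "real n" 1 "int n - m"] by (metis power_int_1_right)
    qed
    show ?thesis using Suc e by (simp add: R_def fps_X_mult_nth)
  qed
qed

theorem corollary1: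
  fixes m :: int
  shows "G (m - 1) = (fps_X / (1 - fps_X)) * fps_deriv (G m)"
proof -
  define E :: "real fps" where "E = fps_X * fps_exp (-1)"
  have E0: "fps_nth E 0 = 0" by (simp add: E_def)
  have dE: "fps_deriv E = (1 - fps_X) * fps_exp (-1)"
  proof -
    have "fps_const (-1::real) = -1" by (simp add: fps_eq_iff)
    then show ?thesis by (simp add: E_def algebra_simps)
  qed
  have u: "fps_X / (1 - fps_X) * (1 - fps_X) = (fps_X :: real fps)"
  proof -
    have z: "fps_nth (1 - fps_X :: real fps) 0 \<noteq> 0" by simp
    show ?thesis unfolding fps_divide_unit[OF z] mult.assoc inverse_mult_eq_1[OF z] by simp
  qed
  have "G (m - 1) = (fps_X oo E) * (fps_deriv (R m) oo E)"
    by (simp add: G_def R_shift fps_compose_mult_distrib[OF E0] E_def[symmetric])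
  also have "\<dots> = E * (fps_deriv (R m) oo E)" using E0 by simp
  also have "\<dots> = (fps_X / (1 - fps_X) * (1 - fps_X)) * fps_exp (-1) * (fps_deriv (R m) oo E)"
    using u by (simp add: E_def)
  also have "\<dots> = (fps_X / (1 - fps_X)) * fps_deriv (G m)"
    by (simp add: G_def E_def[symmetric] fps_compose_deriv[OF E0] dE algebra_simps)
  finally show ?thesis .
qed

end
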